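(* Fix an integer $K\ge 1$ and $r\in(0,1/2)$. For the synchronous space-time-coded decode-and-forward relay network with $K$ relays described in the context, the end-to-end outage probability satisfies $$d_{stc}(r):=\lim_{\mathrm{SNR}\to\infty}-\frac{\log \Pr\left[I_{stc}<R(\mathrm{SNR})\right]}{\log \mathrm{SNR}}=(K+1)(1-2r).$$ In other words, the lower bound $(K+1)(1-2r)\le d_{stc}(r)$ is tight.
   Context: Network: a source $N_S$, $K$ relays $N_{R_1},\dots,N_{R_K}$ and a destination $N_D$. For each transmitter/receiver pair $(i,j)$ with $i\in\{S,R_1,\dots,R_K\}$ and $j\in\{R_1,\dots,R_K,D\}$, $i\neq j$, the channel gain $\alpha_{i,j}$ is a zero-mean circularly symmetric complex Gaussian random variable with variance $\sigma^2_{i,j}>0$. All gains are mutually independent, so $|\alpha_{i,j}|^2$ is exponentially distributed with parameter $\lambda_{i,j}=1/\sigma^2_{i,j}$. For $\mathrm{SNR}>0$ set $\rho_0=\frac{2}{K+1}\mathrm{SNR}$. The target rate is $R=R(\mathrm{SNR})=r\log(1+\mathrm{SNR}\,\sigma^2_{S,D})$, where $r$ is the multiplexing gain. All logarithms are taken in one fixed base. Transmission has two phases. - Phase 1: the source broadcasts. Relay $R_k$ decodes successfully iff $I_{S,R_k}:=\frac12\log(1+\rho_0|\alpha_{S,R_k}|^2)\ge R$. The random decoding set $\mathcal D(s)$ is the set of successful relays. - Phase 2: the relays in $\mathcal D(s)$ transmit, jointly encoding with i.i.d. complex Gaussian codebooks that are independent of the source codebook and perfectly symbol-synchronized. Conditioned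 on $\mathcal D(s)$, the end-to-end mutual information is $$I_{stc}=\frac12\log\left(1+\rho_0|\alpha_{S,D}|^2\right)+\frac12\log\left(1+\rho_0\sum_{R_k\in\mathcal D(s)}|\alpha_{R_k,D}|^2\right),$$ where an empty sum equals $0$. The probability $\Pr[I_{stc}<R]$ averages over the gains, including the randomness of $\mathcal D(s)$. *)

theory Defs
  imports "HOL-Probability.Probability"
begin

text \<open>Links of the relay network that enter the end-to-end mutual information:
  source-destination, source-relay k, relay k-destination (relays indexed 0..K-1).\<close>
datatype link = SD | SR nat | RD nat

definition links :: "nat \<Rightarrow> link set" where
  "links K = {SD} \<union> SR ` {..<K} \<union> RD ` {..<K}"

definition rho0 :: "nat \<Rightarrow> real \<Rightarrow> real" where
  "rho0 K snr = 2 / (real K + 1) * snr"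

definition target_rate :: "real \<Rightarrow> real \<Rightarrow> real \<Rightarrow> real \<Rightarrow> real" where
  "target_rate b r sSD snr = r * log b (1 + snr * sSD)"

text \<open>decoding set D(s): relays k < K with I_{S,R_k} >= R; g are the channel power gains |alpha|^2\<close>
definition decoding_set :: "real \<Rightarrow> nat \<Rightarrow> real \<Rightarrow> real \<Rightarrow> (link \<Rightarrow> real) \<Rightarrow> nat set" where
  "decoding_set b K snr R g =
     {k. k < K \<and> (1/2) * log b (1 + rho0 K snr * g (SR k)) \<ge> R}"

definition I_stc :: "real \<Rightarrow> nat \<Rightarrow> real \<Rightarrow> real \<Rightarrow> (link \<Rightarrow> real) \<Rightarrow> real" where
  "I_stc b K snr R g =
     (1/2) * log b (1 + rho0 K snr * g SD)
   + (1/2) * log b (1 + rho0 K snr * (\<Sum>k\<in>decoding_set b K snr R g. g (RD k)))"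

end

theory Submission
  imports Defs "HOL-Real_Asymp.Real_Asymp"
begin

lemma finite_links: "finite (links K)"
  by (simp add: links_def)

lemma h_less_iff:
  fixes b s x g0 A :: real
  assumes b: "1 < b" and rho: "0 < rho" and x: "0 \<le> x" and A: "1 < A"
  shows "((1/2) * log b (1 + rho * x) < (1/2) * log b A) \<longleftrightarrow> x < (A - 1) / rho"
proof -
  have "((1/2) * log b (1 + rho * x) < (1/2) * log b A) \<longleftrightarrow> log b (1 + rho * x) < log b A"
    by simp
  also have "\<dots> \<longleftrightarrow> 1 + rho * x < A"
    using b rho x A by (intro log_less_cancel_iff) (auto intro: add_pos_nonneg)
  also have "\<dots> \<longleftrightarrow> x < (A - 1) / rho"
    using rho by (simp add: field_simps)
  finally show ?thesis .
qed

lemma h_nonneg: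
  fixes b rho x :: real
  assumes b: "1 < b" and rho: "0 < rho" and x: "0 \<le> x"
  shows "0 \<le> (1/2) * log b (1 + rho * x)"
proof -
  have "1 \<le> 1 + rho * x" using rho x by simp
  hence "log b 1 \<le> log b (1 + rho * x)" using b by (subst log_le_cancel_iff) auto
  thus ?thesis by simp
qed

lemma h_mono:
  fixes b rho x y :: real
  assumes b: "1 < b" and rho: "0 < rho" and x: "0 \<le> x" and "x \<le> y"
  shows "(1/2) * log b (1 + rho * x) \<le> (1/2) * log b (1 + rho * y)"
proof -
  have "rho * x \<le> rho * y" using assms by (intro mult_left_mono) auto
  moreover have "0 < 1 + rho * x" using rho x by (simp add: add_pos_nonneg)
  ultimately have "log b (1 + rho * x) \<le> log b (1 + rho * y)" using b by (subst log_le_cancel_iff) auto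
  thus ?thesis by simp
qed

lemma one_minus_exp_upper: "0 \<le> x \<Longrightarrow> 1 - exp (- x) \<le> (x::real)"
  using exp_ge_add_one_self[of "-x"] by simp

lemma one_minus_exp_lower:
  fixes t l :: real
  assumes "0 \<le> t" "t \<le> 1" "0 \<le> l"
  shows "t * (l * exp (- l)) \<le> 1 - exp (- (t * l))"
proof -
  have "(t*l + 1) * exp (- (t*l)) \<le> 1"
    using exp_ge_add_one_self[of "t*l"] by (simp add: exp_minus field_simps)
  hence a: "t*l * exp (- (t*l)) \<le> 1 - exp (- (t*l))" by (simp add: algebra_simps)
  have "exp (- l) \<le> exp (- (t*l))"
    using assms by (simp add: mult_left_le_one_le)
  hence "t * (l * exp (- l)) \<le> t*l * exp (- (t*l))"
    using assms by (simp add: mult_left_mono mult.assoc)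
  with a show ?thesis by linarith
qed

lemma lim_aux:
  fixes r \<sigma> C k :: real assumes "0<r" "r<1/2" "\<sigma>>0" "k \<ge> 0"
  shows "((\<lambda>s. (- ln C - (k+1) * ln (((1 + s*\<sigma>) powr (2*r) - 1) / (2 / (k+1) * s))) / ln s) \<longlongrightarrow> (k+1)*(1 - 2*r)) at_top"
proof -
  have "((\<lambda>s. (- ln C - (k+1) * ln (((1 + s*\<sigma>) powr (2*r) - 1) / (2 / (k+1) * s))) / ln s) \<longlongrightarrow> - ((k+1)*(2*r - 1))) at_top"
    using assms by real_asymp
  moreover have "- ((k+1)*(2*r - 1)) = (k+1)*(1 - 2*r)" by (simp add: algebra_simps)
  ultimately show ?thesis by simp
qed

lemma T_lim:
  fixes r \<sigma> k :: real assumes "0<r" "r<1/2" "\<sigma>>0" "k \<ge> 0"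
  shows "((\<lambda>s. ((1 + s*\<sigma>) powr (2*r) - 1) / (2 / (k+1) * s)) \<longlongrightarrow> 0) at_top"
  using assms by real_asymp

theorem theorem1:
  fixes M :: "'a measure"
    and G :: "link \<Rightarrow> 'a \<Rightarrow> real"
    and \<sigma>2 :: "link \<Rightarrow> real"
    and K :: nat and r b :: real
  assumes "prob_space M"
    and "K \<ge> 1"
    and "0 < r" and "r < 1/2"
    and "1 < b"
    and "\<And>l. l \<in> links K \<Longrightarrow> 0 < \<sigma>2 l"
    and "\<And>l. l \<in> links K \<Longrightarrow> distributed M lborel (G l) (exponential_density (1 / \<sigma>2 l))"
    and "prob_space.indep_vars M (\<lambda>_. borel) G (links K)"
  shows "((\<lambda>snr. - log b (measure M {\<omega> \<in> space M.
              I_stc b K snr (target_rate b r (\<sigma>2 SD) snr) (\<lambda>l. G l \<omega>)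
                < target_rate b r (\<sigma>2 SD) snr}) / log b snr)
          \<longlongrightarrow> (real K + 1) * (1 - 2 * r)) at_top"
proof -
  interpret P: prob_space M by fact
  define lam where "lam l = 1 / \<sigma>2 l" for l
  have lam_pos: "\<And>l. l \<in> links K \<Longrightarrow> 0 < lam l" using assms(6) by (simp add: lam_def)
  have meas: "\<And>l. l \<in> links K \<Longrightarrow> G l \<in> borel_measurable M"
    using distributed_measurable[OF assms(7)] by simp
  have evmeas: "\<And>l t. l \<in> links K \<Longrightarrow> {\<omega>\<in>space M. G l \<omega> \<le> t} \<in> sets M"
    using meas by measurable
  have cdf: "\<And>l t. l \<in> links K \<Longrightarrow> 0 \<le> t \<Longrightarrow> P.prob {\<omega>\<in>space M. G l \<omega> \<le> t} = 1 - exp (- (t * lam l))"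
    using P.exponential_distributedD_le[OF assms(7)] lam_pos assms(6) unfolding lam_def by simp
  have ind: "P.indep_sets (\<lambda>l. {G l -` A \<inter> space M | A. A \<in> sets borel}) (links K)"
    using assms(8) unfolding P.indep_vars_def2 by simp
  have prodJ: "P.prob (\<Inter>l\<in>J. {\<omega>\<in>space M. G l \<omega> \<le> t}) = (\<Prod>l\<in>J. 1 - exp (- (t * lam l)))"
    if J: "J \<subseteq> links K" "J \<noteq> {}" and t: "0 \<le> t" for J t
  proof -
    have "P.prob (\<Inter>l\<in>J. {\<omega>\<in>space M. G l \<omega> \<le> t}) = (\<Prod>l\<in>J. P.prob {\<omega>\<in>space M. G l \<omega> \<le> t})"
    proof (rule P.indep_setsD[OF ind J])
      show "finite J" using J finite_links finite_subset by blast
      show "\<forall>j\<in>J. {\<omega>\<in>space M. G j \<omega> \<le> t} \<in> {G j -` A \<inter> space M | A. A \<in> sets borel}"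
      proof
        fix j assume "j \<in> J"
        have "{\<omega>\<in>space M. G j \<omega> \<le> t} = G j -` {..t} \<inter> space M" by auto
        thus "{\<omega>\<in>space M. G j \<omega> \<le> t} \<in> {G j -` A \<inter> space M | A. A \<in> sets borel}"
          by (intro CollectI exI[of _ "{..t}"]) auto
      qed
    qed
    also have "\<dots> = (\<Prod>l\<in>J. 1 - exp (- (t * lam l)))"
      using J t cdf by (intro prod.cong) auto
    finally show ?thesis .
  qed
  define N where "N = (\<Union>l\<in>links K. {\<omega>\<in>space M. G l \<omega> \<le> 0})"
  have N_sets: "N \<in> sets M" unfolding N_def using evmeas finite_links by (intro sets.finite_UN) auto
  have N_null: "P.prob N = 0"
  proof -
    have "P.prob N \<le> (\<Sum>l\<in>links K. P.prob {\<omega>\<in>space M. G l \<omega> \<le> 0})"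
      unfolding N_def using evmeas finite_links by (intro P.finite_measure_subadditive_finite) auto
    also have "\<dots> = 0" using cdf by (intro sum.neutral) auto
    finally show ?thesis by (simp add: measure_nonneg antisym)
  qed

  define \<sigma> where "\<sigma> = \<sigma>2 SD"
  have \<sigma>_pos: "0 < \<sigma>" unfolding \<sigma>_def using assms(6) by (simp add: links_def)
  define A where "A s = (1 + s*\<sigma>) powr (2*r)" for s
  define T where "T s = (A s - 1) / rho0 K s" for s
  define Rt where "Rt s = target_rate b r \<sigma> s" for s
  define Out where "Out s = {\<omega> \<in> space M. I_stc b K s (Rt s) (\<lambda>l. G l \<omega>) < Rt s}" for s
  have rho_pos: "0 < rho0 K s" if "0 < s" for s using that by (simp add: rho0_def)
  have A_gt: "1 < A s" if "0 < s" for s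
  proof -
    have "1 powr (2*r) < (1 + s*\<sigma>) powr (2*r)"
      using that \<sigma>_pos assms(3) by (intro powr_less_mono2) auto
    thus ?thesis by (simp add: A_def)
  qed
  have T_pos: "0 < T s" if "0 < s" for s
    using A_gt[OF that] rho_pos[OF that] by (simp add: T_def)
  have Rt_eq: "Rt s = (1/2) * log b (A s)" if "0 < s" for s
    unfolding Rt_def A_def target_rate_def using that \<sigma>_pos by (simp add: log_powr)
  have hl: "(1/2) * log b (1 + rho0 K s * x) < Rt s \<longleftrightarrow> x < T s" if "0 < s" "0 \<le> x" for s x
    unfolding Rt_eq[OF that(1)] T_def using h_less_iff[OF assms(5) rho_pos[OF that(1)] that(2) A_gt[OF that(1)]] .

  have links_mem: "SD \<in> links K" "\<And>k. k < K \<Longrightarrow> SR k \<in> links K" "\<And>k. k < K \<Longrightarrow> RD k \<in> links K"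
    by (auto simp: links_def)
  define J where "J S = insert SD (SR ` S \<union> RD ` ({..<K} - S))" for S
  define E where "E s S = (\<Inter>l\<in>J S. {\<omega>\<in>space M. G l \<omega> \<le> T s})" for s S
  have upper_incl: "Out s \<subseteq> (\<Union>S\<in>Pow {..<K}. E s S) \<union> N" if s: "0 < s" for s
  proof
    fix \<omega> assume om: "\<omega> \<in> Out s"
    show "\<omega> \<in> (\<Union>S\<in>Pow {..<K}. E s S) \<union> N"
    proof (cases "\<omega> \<in> N")
      case True thus ?thesis by simp
    next
      case False
      have sp: "\<omega> \<in> space M" using om by (simp add: Out_def)
      have gpos: "\<And>l. l \<in> links K \<Longrightarrow> 0 < G l \<omega>" using False sp by (auto simp: N_def not_le)
      define g where "g l = G l \<omega>" for l
      define D where "D = decoding_set b K s (Rt s) g"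
      define Ss where "Ss = (\<Sum>k\<in>D. g (RD k))"
      have D_sub: "D \<subseteq> {..<K}" by (auto simp: D_def decoding_set_def)
      have finD: "finite D" using D_sub finite_subset by blast
      have Ss_nn: "0 \<le> Ss" unfolding Ss_def using D_sub gpos links_mem
        by (intro sum_nonneg) (auto simp: g_def less_imp_le)
      have I_eq: "I_stc b K s (Rt s) (\<lambda>l. G l \<omega>) = (1/2) * log b (1 + rho0 K s * g SD) + (1/2) * log b (1 + rho0 K s * Ss)"
        by (simp add: I_stc_def Ss_def D_def g_def[abs_def])
      have Ilt: "(1/2) * log b (1 + rho0 K s * g SD) + (1/2) * log b (1 + rho0 K s * Ss) < Rt s"
        using om I_eq by (simp add: Out_def)
      have h2: "0 \<le> (1/2) * log b (1 + rho0 K s * Ss)" using h_nonneg[OF assms(5) rho_pos[OF s] Ss_nn] .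
      have g0nn: "0 \<le> g SD" using gpos links_mem by (simp add: g_def less_imp_le)
      have h1: "0 \<le> (1/2) * log b (1 + rho0 K s * g SD)" using h_nonneg[OF assms(5) rho_pos[OF s] g0nn] .
      have sd: "g SD < T s" using Ilt h2 hl[OF s g0nn] by linarith
      have relay: "g (RD k) < T s" if k: "k < K" "T s < g (SR k)" for k
      proof -
        have gsr: "0 \<le> g (SR k)" using gpos links_mem k by (simp add: g_def less_imp_le)
        have grd: "0 \<le> g (RD k)" using gpos links_mem k by (simp add: g_def less_imp_le)
        have "\<not> (1/2) * log b (1 + rho0 K s * g (SR k)) < Rt s" using hl[OF s gsr] k by simp
        hence kD: "k \<in> D" using k by (simp add: D_def decoding_set_def not_less)
        have "g (RD k) \<le> Ss" unfolding Ss_def using kD finD D_sub gpos links_mem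
          by (intro member_le_sum) (auto simp: g_def less_imp_le)
        hence "(1/2) * log b (1 + rho0 K s * g (RD k)) \<le> (1/2) * log b (1 + rho0 K s * Ss)"
          using h_mono[OF assms(5) rho_pos[OF s] grd] by blast
        hence "(1/2) * log b (1 + rho0 K s * g (RD k)) < Rt s" using Ilt h1 by linarith
        thus ?thesis using hl[OF s grd] by simp
      qed
      have relay2: "\<And>k. k < K \<Longrightarrow> \<not> G (SR k) \<omega> \<le> T s \<Longrightarrow> G (RD k) \<omega> \<le> T s"
        using relay by (force simp: g_def not_le)
      define S where "S = {k. k < K \<and> G (SR k) \<omega> \<le> T s}"
      have "\<omega> \<in> E s S"
        unfolding E_def J_def using sp sd relay2 by (auto simp: S_def g_def less_imp_le)
      moreover have "S \<in> Pow {..<K}" by (auto simp: S_def)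
      ultimately show ?thesis by blast
    qed
  qed
  define J0 where "J0 = insert SD (SR ` {..<K})"
  have lower_incl: "(\<Inter>l\<in>J0. {\<omega>\<in>space M. G l \<omega> \<le> T s / 2}) - N \<subseteq> Out s" if s: "0 < s" for s
  proof
    fix \<omega> assume om: "\<omega> \<in> (\<Inter>l\<in>J0. {\<omega>\<in>space M. G l \<omega> \<le> T s / 2}) - N"
    have sp: "\<omega> \<in> space M" using om by (auto simp: J0_def)
    have gpos: "\<And>l. l \<in> links K \<Longrightarrow> 0 < G l \<omega>" using om sp by (auto simp: N_def not_le)
    have Tp: "0 < T s" using T_pos[OF s] .
    have D: "decoding_set b K s (Rt s) (\<lambda>l. G l \<omega>) = {}"
    proof -
      have "(1/2) * log b (1 + rho0 K s * G (SR k) \<omega>) < Rt s" if "k < K" for k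
      proof -
        have "G (SR k) \<omega> \<le> T s / 2" using om that by (auto simp: J0_def)
        moreover have "0 \<le> G (SR k) \<omega>" using gpos links_mem that by (simp add: less_imp_le)
        ultimately show ?thesis using hl[OF s] Tp by simp
      qed
      thus ?thesis by (force simp: decoding_set_def not_le)
    qed
    have g0: "0 \<le> G SD \<omega>" using gpos links_mem by (simp add: less_imp_le)
    have "G SD \<omega> \<le> T s / 2" using om by (auto simp: J0_def)
    hence "(1/2) * log b (1 + rho0 K s * G SD \<omega>) < Rt s" using hl[OF s g0] Tp by simp
    thus "\<omega> \<in> Out s" using sp D by (simp add: Out_def I_stc_def)
  qed

  have Out_sets: "Out s \<in> sets M" for s
  proof -
    define F where "F \<omega> = (1/2) * log b (1 + rho0 K s * G SD \<omega>) + (1/2) * log b (1 + rho0 K s *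
        (\<Sum>k<K. if Rt s \<le> (1/2) * log b (1 + rho0 K s * G (SR k) \<omega>) then G (RD k) \<omega> else 0))" for \<omega>
    have F_eq: "I_stc b K s (Rt s) (\<lambda>l. G l \<omega>) = F \<omega>" for \<omega>
    proof -
      have "decoding_set b K s (Rt s) (\<lambda>l. G l \<omega>) = {k\<in>{..<K}. Rt s \<le> (1/2) * log b (1 + rho0 K s * G (SR k) \<omega>)}"
        by (auto simp: decoding_set_def)
      moreover have "(\<Sum>k\<in>{k\<in>{..<K}. Rt s \<le> (1/2) * log b (1 + rho0 K s * G (SR k) \<omega>)}. G (RD k) \<omega>)
          = (\<Sum>k<K. if Rt s \<le> (1/2) * log b (1 + rho0 K s * G (SR k) \<omega>) then G (RD k) \<omega> else 0)"
        by (rule sum.inter_filter) simp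
      ultimately show ?thesis unfolding I_stc_def F_def by simp
    qed
    have [measurable]: "G SD \<in> borel_measurable M" using meas links_mem by simp
    have [measurable]: "(\<lambda>\<omega>. \<Sum>k<K. if Rt s \<le> (1/2) * log b (1 + rho0 K s * G (SR k) \<omega>) then G (RD k) \<omega> else 0) \<in> borel_measurable M"
    proof (rule borel_measurable_sum)
      fix k assume "k \<in> {..<K}"
      hence [measurable]: "G (SR k) \<in> borel_measurable M" "G (RD k) \<in> borel_measurable M"
        using meas links_mem by auto
      show "(\<lambda>\<omega>. if Rt s \<le> (1/2) * log b (1 + rho0 K s * G (SR k) \<omega>) then G (RD k) \<omega> else 0) \<in> borel_measurable M"
        by measurable
    qed
    have [measurable]: "F \<in> borel_measurable M" unfolding F_def by measurable
    have "Out s = {\<omega>\<in>space M. F \<omega> < Rt s}" by (simp add: Out_def F_eq)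
    also have "\<dots> \<in> sets M" by measurable
    finally show ?thesis .
  qed

  define Lam where "Lam = (\<Sum>l\<in>links K. lam l)"
  have lam_le: "lam l \<le> Lam" if "l \<in> links K" for l
    unfolding Lam_def using that finite_links lam_pos by (intro member_le_sum) (auto intro: less_imp_le)
  have J_sub: "J S \<subseteq> links K" if "S \<subseteq> {..<K}" for S
    using that by (auto simp: J_def links_def)
  have J_card: "card (J S) = K + 1" if "S \<subseteq> {..<K}" for S
  proof -
    have fin: "finite S" using that finite_subset by blast
    have "card (SR ` S \<union> RD ` ({..<K} - S)) = card (SR ` S) + card (RD ` ({..<K} - S))"
      using fin by (intro card_Un_disjoint) auto
    also have "\<dots> = card S + card ({..<K} - S)"
      by (simp add: card_image inj_on_def)
    also have "\<dots> = K"
    proof -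
      have "card S \<le> K" using card_mono[OF _ that] by simp
      thus ?thesis using that fin by (simp add: card_Diff_subset)
    qed
    finally show ?thesis unfolding J_def using fin by (subst card_insert_disjoint) auto
  qed
  have J0_sub: "J0 \<subseteq> links K" by (auto simp: J0_def links_def)
  have J0_card: "card J0 = K + 1" unfolding J0_def by (subst card_insert_disjoint) (auto simp: card_image inj_on_def)
  have upper: "P.prob (Out s) \<le> 2^K * (T s * Lam)^(K+1)" if s: "0 < s" for s
  proof -
    have Esets: "E s S \<in> sets M" if "S \<subseteq> {..<K}" for S
      unfolding E_def using J_sub[OF that] evmeas finite_subset[OF J_sub[OF that] finite_links]
      by (intro sets.finite_INT) (auto simp: J_def)
    have Usets: "(\<Union>S\<in>Pow {..<K}. E s S) \<in> sets M"
      using Esets by (intro sets.finite_UN) auto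
    have "P.prob (Out s) \<le> P.prob ((\<Union>S\<in>Pow {..<K}. E s S) \<union> N)"
      using upper_incl[OF s] Usets N_sets by (intro P.finite_measure_mono) auto
    also have "\<dots> \<le> P.prob (\<Union>S\<in>Pow {..<K}. E s S) + P.prob N"
      using Usets N_sets by (intro measure_subadditive) (auto simp: P.emeasure_eq_measure)
    also have "\<dots> \<le> (\<Sum>S\<in>Pow {..<K}. P.prob (E s S))"
      using Esets N_null by (auto intro!: P.finite_measure_subadditive_finite)
    also have "\<dots> \<le> (\<Sum>S\<in>Pow {..<K}. (T s * Lam)^(K+1))"
    proof (rule sum_mono)
      fix S assume S: "S \<in> Pow {..<K}"
      have "P.prob (E s S) = (\<Prod>l\<in>J S. 1 - exp (- (T s * lam l)))"
        unfolding E_def using S J_sub T_pos[OF s] by (intro prodJ) (auto simp: J_def)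
      also have "\<dots> \<le> (\<Prod>l\<in>J S. T s * Lam)"
      proof (rule prod_mono)
        fix l assume l: "l \<in> J S"
        hence ll: "l \<in> links K" using J_sub S by auto
        have tl: "0 \<le> T s * lam l" using T_pos[OF s] lam_pos[OF ll] by simp
        have "1 - exp (- (T s * lam l)) \<le> T s * lam l" using one_minus_exp_upper[OF tl] .
        also have "\<dots> \<le> T s * Lam" using lam_le[OF ll] T_pos[OF s] by simp
        finally show "0 \<le> 1 - exp (- (T s * lam l)) \<and> 1 - exp (- (T s * lam l)) \<le> T s * Lam"
          using tl by simp
      qed
      also have "\<dots> = (T s * Lam)^(K+1)" using J_card S by simp
      finally show "P.prob (E s S) \<le> (T s * Lam)^(K+1)" .
    qed
    also have "\<dots> = 2^K * (T s * Lam)^(K+1)" by (simp add: card_Pow)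
    finally show ?thesis .
  qed
  define c0 where "c0 = (\<Prod>l\<in>J0. lam l * exp (- lam l))"
  have c0_pos: "0 < c0" unfolding c0_def using J0_sub lam_pos by (intro prod_pos) auto
  have lower: "c0 * (T s / 2)^(K+1) \<le> P.prob (Out s)" if s: "0 < s" and Tle: "T s \<le> 2" for s
  proof -
    have t0: "0 \<le> T s / 2" "T s / 2 \<le> 1" using T_pos[OF s] Tle by auto
    have Isets: "(\<Inter>l\<in>J0. {\<omega>\<in>space M. G l \<omega> \<le> T s / 2}) \<in> sets M"
    proof (rule sets.finite_INT)
      show "finite J0" "J0 \<noteq> {}" by (auto simp: J0_def)
      fix l assume "l \<in> J0"
      thus "{\<omega>\<in>space M. G l \<omega> \<le> T s / 2} \<in> sets M" using evmeas[of l "T s / 2"] J0_sub by blast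
    qed
    have "c0 * (T s / 2)^(K+1) = (\<Prod>l\<in>J0. T s / 2 * (lam l * exp (- lam l)))"
    proof -
      have "(\<Prod>l\<in>J0. T s / 2 * (lam l * exp (- lam l))) = (\<Prod>l\<in>J0. T s / 2) * c0"
        unfolding c0_def by (rule prod.distrib)
      also have "(\<Prod>l\<in>J0. T s / 2) = (T s / 2)^(K+1)" using J0_card by simp
      finally show ?thesis by simp
    qed
    also have "\<dots> \<le> (\<Prod>l\<in>J0. 1 - exp (- (T s / 2 * lam l)))"
    proof (rule prod_mono)
      fix l assume "l \<in> J0"
      hence ll: "0 < lam l" using J0_sub lam_pos by auto
      show "0 \<le> T s / 2 * (lam l * exp (- lam l)) \<and> T s / 2 * (lam l * exp (- lam l)) \<le> 1 - exp (- (T s / 2 * lam l))"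
        using one_minus_exp_lower[OF t0 less_imp_le[OF ll]] t0 ll by simp
    qed
    also have "\<dots> = P.prob (\<Inter>l\<in>J0. {\<omega>\<in>space M. G l \<omega> \<le> T s / 2})"
      using J0_sub t0 by (intro prodJ[symmetric]) (auto simp: J0_def)
    also have "\<dots> \<le> P.prob (Out s \<union> N)"
      using lower_incl[OF s] Out_sets N_sets by (intro P.finite_measure_mono) auto
    also have "\<dots> \<le> P.prob (Out s) + P.prob N"
      using Out_sets N_sets by (intro measure_subadditive) (auto simp: P.emeasure_eq_measure)
    finally show ?thesis using N_null by simp
  qed

  have Tform: "T s = ((1 + s*\<sigma>) powr (2*r) - 1) / (2 / (real K + 1) * s)" for s
    by (simp add: T_def A_def rho0_def)
  have Tlim: "(T \<longlongrightarrow> 0) at_top"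
    unfolding Tform[abs_def] using T_lim[OF assms(3,4) \<sigma>_pos, of "real K"] by simp
  have evT: "eventually (\<lambda>s. T s < 2) at_top" using order_tendstoD(2)[OF Tlim] by simp
  have ev1: "eventually (\<lambda>s. 1 < (s::real)) at_top" by (rule eventually_gt_at_top)
  have Lam_pos: "0 < Lam" using lam_pos[OF links_mem(1)] lam_le[OF links_mem(1)] by simp
  define c1 where "c1 = c0 / 2^(K+1)"
  define C where "C = 2^K * Lam^(K+1)"
  have c1_pos: "0 < c1" using c0_pos by (simp add: c1_def)
  have C_pos: "0 < C" using Lam_pos by (simp add: C_def)
  define f where "f snr = - log b (P.prob (Out snr)) / log b snr" for snr
  define Lf where "Lf s = (- ln C - (real K + 1) * ln (T s)) / ln s" for s
  define Uf where "Uf s = (- ln c1 - (real K + 1) * ln (T s)) / ln s" for s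
  have bounds: "Lf s \<le> f s \<and> f s \<le> Uf s" if s1: "1 < s" and sT: "T s < 2" for s
  proof -
    have s: "0 < s" using s1 by simp
    have Tp: "0 < T s" using T_pos[OF s] .
    define p where "p = P.prob (Out s)"
    have lo: "c1 * T s^(K+1) \<le> p" using lower[OF s] sT unfolding p_def c1_def
      by (simp add: power_divide)
    have "2^K * (T s * Lam)^(K+1) = C * T s^(K+1)" unfolding C_def by (simp only: power_mult_distrib mult_ac)
    hence up: "p \<le> C * T s^(K+1)" using upper[OF s] unfolding p_def by (simp only:)
    have pp: "0 < p" using lo c1_pos Tp by (smt (verit) mult_pos_pos zero_less_power)
    have lnup: "ln p \<le> ln C + (real K + 1) * ln (T s)"
    proof -
      have "ln p \<le> ln (C * T s^(K+1))" using up pp by simp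
      thus ?thesis using C_pos Tp by (simp add: ln_mult ln_realpow algebra_simps)
    qed
    have lnlo: "ln c1 + (real K + 1) * ln (T s) \<le> ln p"
    proof -
      have "ln (c1 * T s^(K+1)) \<le> ln p" using lo pp c1_pos Tp by simp
      thus ?thesis using c1_pos Tp by (simp add: ln_mult ln_realpow algebra_simps)
    qed
    have lns: "0 < ln s" using s1 by simp
    have lnb: "0 < ln b" using assms(5) by simp
    have feq: "f s = - ln p / ln s" unfolding f_def p_def log_def using lnb by (simp add: field_simps)
    have "(- ln C - (real K + 1) * ln (T s)) / ln s \<le> (- ln p) / ln s"
      using lns lnup by (intro divide_right_mono) auto
    moreover have "(- ln p) / ln s \<le> (- ln c1 - (real K + 1) * ln (T s)) / ln s"
      using lns lnlo by (intro divide_right_mono) auto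
    ultimately show ?thesis unfolding feq Lf_def Uf_def by simp
  qed
  have "(f \<longlongrightarrow> (real K + 1) * (1 - 2 * r)) at_top"
  proof (rule tendsto_sandwich[of Lf f at_top Uf])
    show "eventually (\<lambda>s. Lf s \<le> f s) at_top"
      by (rule eventually_mono[OF eventually_conj[OF evT ev1]]) (use bounds in blast)
    show "eventually (\<lambda>s. f s \<le> Uf s) at_top"
      by (rule eventually_mono[OF eventually_conj[OF evT ev1]]) (use bounds in blast)
    show "(Lf \<longlongrightarrow> (real K + 1) * (1 - 2 * r)) at_top"
      unfolding Lf_def Tform using lim_aux[OF assms(3,4) \<sigma>_pos, of "real K" C] by simp
    show "(Uf \<longlongrightarrow> (real K + 1) * (1 - 2 * r)) at_top"
      unfolding Uf_def Tform using lim_aux[OF assms(3,4) \<sigma>_pos, of "real K" c1] by simp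
  qed
  thus ?thesis unfolding f_def Out_def Rt_def \<sigma>_def .
qed

end
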